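(* For the $b$-coupled spin-oscillator $F=(L,H)$, the only singular points (points where $dF$ has rank $<2$) are the two points $N=((0,0,1),(0,0))$ and $S=((0,0,-1),(0,0))$ of $S^2\times\mathbb R^2$. Both are fixed points ($dL=dH=0$), both are non-degenerate and of focus-focus type, and $dF$ has rank $2$ at every other point of $M$ (there are no singular points of rank $1$).
   Context: Fix constants $\rho_1,\rho_2>0$. Let $M=S^2\times\mathbb R^2$, where $S^2\subset\mathbb R^3$ is the unit sphere with coordinates $(x,y,z)$, $x^2+y^2+z^2=1$, and $(u,v)$ are coordinates on $\mathbb R^2$; let $Z=\{z=0\}\times\mathbb R^2$. On $\{|z|<1\}$ use cylindrical coordinates $(\theta,z)$ with $\theta=\arg(x+iy)$; on $\{z\neq0\}$ use $(x,y)$ as coordinates on each open hemisphere. The $b$-symplectic form is $\omega=-\rho_1\,\omega^b_{S^2}+\rho_2\,du\wedge dv$, where $\omega^b_{S^2}=d\theta\wedge\frac{dz}{z}$ on $\{|z|<1\}$ and $\omega^b_{S^2}=\frac{1}{1-x^2-y^2}dx\wedge dy$ on $\{z\ne0\}$. The $b$-coupled spin-oscillator is $F=(L,H)$ with $L=\rho_1\log|z|+\frac{\rho_2}{2}(u^2+v^2)$ and $H=\frac12(xu+yv)$; differentials are taken as $b$-forms. A fixed point $p$ (located away from $Z$) with $\Omega$ the matrix of $\omega$ at $p$ is non-degenerate if the operators $A_L=\Omega^{-1}d^2L(p)$, $A_H=\Omega^{-1}d^2H(p)$ span a Cartan subalgebra of $\mathfrak{sp}(4,\mathbb R)$ (in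 particular $d^2L(p),d^2H(p)$ are linearly independent and some combination $c_1A_L+c_2A_H$ has four distinct eigenvalues); it is of focus-focus type if such a combination has eigenvalues $\pm\alpha\pm i\beta$ with $\alpha,\beta\in\mathbb R\setminus\{0\}$, and of elliptic-elliptic type if they are $\pm i\alpha,\pm i\beta$ with $\alpha\ne\beta$ nonzero reals. *)

theory Defs
  imports "HOL-Analysis.Analysis"
begin

(* Points of M = S^2 x R^2 are 5-tuples (x,y,z,u,v) with x^2+y^2+z^2 = 1. *)
type_synonym pt = "real \<times> real \<times> real \<times> real \<times> real"

definition M :: "pt set" where
  "M = {(x,y,z,u,v). x^2 + y^2 + z^2 = 1}"

definition Npt :: pt where "Npt = (0,0,1,0,0)"
definition Spt :: pt where "Spt = (0,0,-1,0,0)"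

definition Lfun :: "real \<Rightarrow> real \<Rightarrow> pt \<Rightarrow> real" where
  "Lfun \<rho>1 \<rho>2 = (\<lambda>(x,y,z,u,v). \<rho>1 * ln \<bar>z\<bar> + \<rho>2 / 2 * (u^2 + v^2))"

definition Hfun :: "pt \<Rightarrow> real" where
  "Hfun = (\<lambda>(x,y,z,u,v). (x * u + y * v) / 2)"

definition partial :: "(real^4 \<Rightarrow> real) \<Rightarrow> real^4 \<Rightarrow> 4 \<Rightarrow> real" where
  "partial f q i = deriv (\<lambda>t. f (q + (t - q$i) *\<^sub>R axis i 1)) (q$i)"

(* cylindrical chart (theta, z, u, v) on {|z| < 1} *)
definition cyl :: "(pt \<Rightarrow> real) \<Rightarrow> real^4 \<Rightarrow> real" where
  "cyl f q = f (sqrt (1 - (q$2)^2) * cos (q$1), sqrt (1 - (q$2)^2) * sin (q$1), q$2, q$3, q$4)"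

definition cyl_coords :: "pt \<Rightarrow> real^4" where
  "cyl_coords = (\<lambda>(x,y,z,u,v). vector [Arg (Complex x y), z, u, v])"

(* hemisphere chart (x, y, u, v) on {z > 0} (s = 1) and {z < 0} (s = -1) *)
definition hem :: "real \<Rightarrow> (pt \<Rightarrow> real) \<Rightarrow> real^4 \<Rightarrow> real" where
  "hem s f q = f (q$1, q$2, s * sqrt (1 - (q$1)^2 - (q$2)^2), q$3, q$4)"

definition hem_coords :: "pt \<Rightarrow> real^4" where
  "hem_coords = (\<lambda>(x,y,z,u,v). vector [x, y, u, v])"

definition zc :: "pt \<Rightarrow> real" where "zc = (\<lambda>(x,y,z,u,v). z)"

(* coefficients of the b-differential df at p.
   Away from Z: ordinary differential in the chart (x,y,u,v), basis dx,dy,du,dv.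
   On Z: b-cotangent basis d theta, dz/z, du, dv of the cylindrical chart; the coefficients
   (d_theta f, z d_z f, d_u f, d_v f), smooth as b-form coefficients, are evaluated at Z as
   their (continuous) limit from the complement of Z. *)
definition bpart_cyl :: "(pt \<Rightarrow> real) \<Rightarrow> real^4 \<Rightarrow> 4 \<Rightarrow> real" where
  "bpart_cyl f q i = (if i = 2 then q$2 * partial (cyl f) q i else partial (cyl f) q i)"

definition bdiff :: "(pt \<Rightarrow> real) \<Rightarrow> pt \<Rightarrow> real^4" where
  "bdiff f p =
     (if zc p = 0
      then (\<chi> i. Lim (at (cyl_coords p) within {q. q$2 \<noteq> 0}) (\<lambda>q. bpart_cyl f q i))
      else (\<chi> i. partial (hem (sgn (zc p)) f) (hem_coords p) i))"

definition rank_dF :: "real \<Rightarrow> real \<Rightarrow> pt \<Rightarrow> nat" where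
  "rank_dF \<rho>1 \<rho>2 p = rank (vector [bdiff (Lfun \<rho>1 \<rho>2) p, bdiff Hfun p] :: real^4^2)"

definition fixed_point :: "real \<Rightarrow> real \<Rightarrow> pt \<Rightarrow> bool" where
  "fixed_point \<rho>1 \<rho>2 p \<longleftrightarrow> bdiff (Lfun \<rho>1 \<rho>2) p = 0 \<and> bdiff Hfun p = 0"

definition hess :: "(pt \<Rightarrow> real) \<Rightarrow> pt \<Rightarrow> real^4^4" where
  "hess f p = (\<chi> i j. partial (\<lambda>q. partial (hem (sgn (zc p)) f) q j) (hem_coords p) i)"

(* matrix of omega = -rho1 omega^b_{S^2} + rho2 du/\dv at p (p not in Z), chart (x,y,u,v),
   Omega i j = omega(e_i, e_j), with omega^b_{S^2} = 1/(1-x^2-y^2) dx/\dy *)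
definition Omega :: "real \<Rightarrow> real \<Rightarrow> pt \<Rightarrow> real^4^4" where
  "Omega \<rho>1 \<rho>2 = (\<lambda>(x,y,z,u,v). let c = - \<rho>1 / (1 - x^2 - y^2) in
     vector [vector [0, c, 0, 0], vector [-c, 0, 0, 0],
             vector [0, 0, 0, \<rho>2], vector [0, 0, -\<rho>2, 0]])"

definition sp :: "real^4^4 \<Rightarrow> (real^4^4) set" where
  "sp W = {A. transpose A ** W + W ** A = 0}"

definition lie_br :: "real^4^4 \<Rightarrow> real^4^4 \<Rightarrow> real^4^4" where
  "lie_br A B = A ** B - B ** A"

primrec lcs :: "(real^4^4) set \<Rightarrow> nat \<Rightarrow> (real^4^4) set" where
  "lcs h 0 = h"
| "lcs h (Suc k) = span {lie_br X Y | X Y. X \<in> h \<and> Y \<in> lcs h k}"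

definition cartan_subalgebra :: "(real^4^4) set \<Rightarrow> (real^4^4) set \<Rightarrow> bool" where
  "cartan_subalgebra g h \<longleftrightarrow>
     subspace h \<and> h \<subseteq> g \<and> (\<forall>X\<in>h. \<forall>Y\<in>h. lie_br X Y \<in> h)
     \<and> (\<exists>k. lcs h k = {0})
     \<and> {X \<in> g. \<forall>Y\<in>h. lie_br X Y \<in> h} = h"

definition A_op :: "real^4^4 \<Rightarrow> real^4^4 \<Rightarrow> real^4^4" where
  "A_op W S = matrix_inv W ** S"

definition nondegenerate :: "real \<Rightarrow> real \<Rightarrow> pt \<Rightarrow> bool" where
  "nondegenerate \<rho>1 \<rho>2 p \<longleftrightarrow>
     cartan_subalgebra (sp (Omega \<rho>1 \<rho>2 p))
       (span {A_op (Omega \<rho>1 \<rho>2 p) (hess (Lfun \<rho>1 \<rho>2) p),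
              A_op (Omega \<rho>1 \<rho>2 p) (hess Hfun p)})"

definition eigenvals :: "real^4^4 \<Rightarrow> complex set" where
  "eigenvals A = {e. \<exists>w :: complex^4. w \<noteq> 0 \<and>
      (\<chi> i. \<Sum>j\<in>UNIV. complex_of_real (A$i$j) * w$j) = (\<chi> i. e * w$i)}"

definition focus_focus :: "real \<Rightarrow> real \<Rightarrow> pt \<Rightarrow> bool" where
  "focus_focus \<rho>1 \<rho>2 p \<longleftrightarrow> nondegenerate \<rho>1 \<rho>2 p \<and>
     (\<exists>c1 c2 \<alpha> \<beta>. \<alpha> \<noteq> 0 \<and> \<beta> \<noteq> 0 \<and>
        eigenvals (c1 *\<^sub>R A_op (Omega \<rho>1 \<rho>2 p) (hess (Lfun \<rho>1 \<rho>2) p)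
                 + c2 *\<^sub>R A_op (Omega \<rho>1 \<rho>2 p) (hess Hfun p))
        = {Complex \<alpha> \<beta>, Complex \<alpha> (-\<beta>), Complex (-\<alpha>) \<beta>, Complex (-\<alpha>) (-\<beta>)})"

end

theory Submission
  imports Defs
begin


lemma vector_4 [simp]:
 "(vector [a,b,c,d] ::('a::zero)^4)$1 = a"
 "(vector [a,b,c,d] ::('a::zero)^4)$2 = b"
 "(vector [a,b,c,d] ::('a::zero)^4)$3 = c"
 "(vector [a,b,c,d] ::('a::zero)^4)$4 = d"
  unfolding vector_def by simp_all

lemma axis4 [simp]:
  "(axis (1::4) (1::real))$1 = 1" "(axis (1::4) (1::real))$2 = 0" "(axis (1::4) (1::real))$3 = 0" "(axis (1::4) (1::real))$4 = 0"
  "(axis (2::4) (1::real))$1 = 0" "(axis (2::4) (1::real))$2 = 1" "(axis (2::4) (1::real))$3 = 0" "(axis (2::4) (1::real))$4 = 0"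
  "(axis (3::4) (1::real))$1 = 0" "(axis (3::4) (1::real))$2 = 0" "(axis (3::4) (1::real))$3 = 1" "(axis (3::4) (1::real))$4 = 0"
  "(axis (4::4) (1::real))$1 = 0" "(axis (4::4) (1::real))$2 = 0" "(axis (4::4) (1::real))$3 = 0" "(axis (4::4) (1::real))$4 = 1"
  by (simp_all add: axis_def)

lemma partial_eqI:
  assumes d: "(g has_derivative g') (at q)" and S: "open S" "q \<in> S" and eq: "\<And>y. y \<in> S \<Longrightarrow> f y = g y"
  shows "partial f q i = g' (axis i 1)"
proof -
  have df: "(f has_derivative g') (at q)"
    using has_derivative_transform_within_open[OF d S] eq by metis
  have dl: "((\<lambda>t. q + (t - q$i) *\<^sub>R axis i 1) has_derivative (\<lambda>h. h *\<^sub>R axis i (1::real))) (at (q$i))"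
    by (auto intro!: derivative_eq_intros)
  have qq: "q + (q$i - q$i) *\<^sub>R axis i 1 = q" by simp
  have "((\<lambda>t. f (q + (t - q$i) *\<^sub>R axis i 1)) has_derivative (\<lambda>h. g' (h *\<^sub>R axis i 1))) (at (q$i))"
    using diff_chain_at[OF dl, unfolded qq, OF df] by (simp add: o_def)
  moreover have "(\<lambda>h. g' (h *\<^sub>R axis i 1)) = (*) (g' (axis i 1))"
    using has_derivative_linear[OF d] by (auto simp: linear_scale mult.commute linear_cmul)
  ultimately have "((\<lambda>t. f (q + (t - q$i) *\<^sub>R axis i 1)) has_field_derivative g' (axis i 1)) (at (q$i))"
    by (simp add: has_field_derivative_def)
  then show ?thesis unfolding partial_def by (rule DERIV_imp_deriv)
qed



definition wq :: "real^4 \<Rightarrow> real" where "wq q = 1 - (q$1)^2 - (q$2)^2"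

definition SD :: "(real^4) set" where "SD = {q. (q$1)^2 + (q$2)^2 < 1}"

lemma open_SD: "open SD"
  unfolding SD_def by (auto intro!: open_Collect_less continuous_intros)

lemma hemL: assumes "s = 1 \<or> s = -1" "q \<in> SD"
  shows "hem s (Lfun r1 r2) q = r1 / 2 * ln (wq q) + r2 / 2 * ((q$3)^2 + (q$4)^2)"
proof -
  have w: "wq q > 0" using assms(2) by (simp add: SD_def wq_def)
  have "\<bar>s * sqrt (1 - (q$1)^2 - (q$2)^2)\<bar> = sqrt (wq q)"
    using assms(1) w by (auto simp: wq_def)
  moreover have "ln (sqrt (wq q)) = ln (wq q) / 2" using w by (simp add: ln_sqrt)
  ultimately show ?thesis by (simp add: hem_def Lfun_def)
qed

lemma hemH: "hem s Hfun q = (q$1 * q$3 + q$2 * q$4) / 2"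
  by (simp add: hem_def Hfun_def)

lemma has_derivative_vec_nth4[derivative_intros]:
  "((\<lambda>x::real^4. x$i) has_derivative (\<lambda>h. h$i)) (at q within S)"
  by (rule bounded_linear_imp_has_derivative[OF bounded_linear_vec_nth])

definition GL' :: "real \<Rightarrow> real \<Rightarrow> real^4 \<Rightarrow> real^4 \<Rightarrow> real" where
  "GL' r1 r2 q h = r1 / 2 * (- (2 * q$1 * h$1 + 2 * q$2 * h$2) / wq q) + r2 * (q$3 * h$3 + q$4 * h$4)"

lemma GL_deriv: assumes "q \<in> SD"
  shows "((\<lambda>q. r1 / 2 * ln (wq q) + r2 / 2 * ((q$3)^2 + (q$4)^2)) has_derivative GL' r1 r2 q) (at q)"
proof -
  have w: "wq q > 0" using assms by (simp add: SD_def wq_def)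
  show ?thesis unfolding wq_def
    apply (auto intro!: derivative_eq_intros simp: w[unfolded wq_def])
    using w apply (simp add: wq_def)
    apply (rule ext) apply (simp add: GL'_def wq_def field_simps)
    done
qed



definition GH' :: "real^4 \<Rightarrow> real^4 \<Rightarrow> real" where
  "GH' q h = (h$1 * q$3 + q$1 * h$3 + h$2 * q$4 + q$2 * h$4) / 2"

lemma GH_deriv: "((\<lambda>q::real^4. (q$1 * q$3 + q$2 * q$4) / 2) has_derivative GH' q) (at q)"
  apply (auto intro!: derivative_eq_intros)
  apply (rule ext) apply (simp add: GH'_def field_simps)
  done

lemma hem_coords_SD:
  assumes "p \<in> M" "zc p \<noteq> 0" shows "hem_coords p \<in> SD"
proof -
  obtain x y z u v where p: "p = (x,y,z,u,v)" by (cases p) auto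
  have "z^2 > 0" using assms by (simp add: p zc_def)
  moreover have "x^2 + y^2 + z^2 = 1" using assms(1) by (simp add: p M_def)
  ultimately have "x^2 + y^2 < 1" by linarith
  then show ?thesis by (simp add: p hem_coords_def SD_def)
qed

lemma sgn_cases: "zc p \<noteq> 0 \<Longrightarrow> sgn (zc p) = 1 \<or> sgn (zc p) = -1"
  by (auto simp: sgn_if)

lemma bdiff_L_hem:
  assumes "p \<in> M" "zc p \<noteq> 0"
  shows "bdiff (Lfun r1 r2) p $ i = GL' r1 r2 (hem_coords p) (axis i 1)"
proof -
  have q: "hem_coords p \<in> SD" using hem_coords_SD[OF assms] .
  show ?thesis
    unfolding bdiff_def using assms(2)
    apply simp
    apply (rule partial_eqI[OF GL_deriv[OF q] open_SD q])
    using hemL sgn_cases[OF assms(2)] by blast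
qed

lemma bdiff_H_hem:
  assumes "zc p \<noteq> 0"
  shows "bdiff Hfun p $ i = GH' (hem_coords p) (axis i 1)"
  unfolding bdiff_def using assms
  apply simp
  apply (rule partial_eqI[OF GH_deriv open_UNIV UNIV_I])
  by (simp add: hemH)

lemma zero4: "(vector [0,0,0,0] :: real^4) = 0"
  by (simp add: vec_eq_iff forall_4)

lemma zero_SD: "0 \<in> SD" by (simp add: SD_def)

lemma NS_facts:
  assumes "p0 = Npt \<or> p0 = Spt"
  shows "hem_coords p0 = 0" "zc p0 \<noteq> 0" "p0 \<in> M"
  using assms by (auto simp: Npt_def Spt_def hem_coords_def zero4 zc_def M_def)

lemma hess_L:
  assumes "p0 = Npt \<or> p0 = Spt"
  shows "hess (Lfun r1 r2) p0 $ i $ j =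
    - r1 * ((axis i 1)$1 * (axis j 1)$1 + (axis i 1)$2 * (axis j 1)$2)
    + r2 * ((axis i 1)$3 * (axis j 1)$3 + (axis i 1)$4 * (axis j 1)$4)"
proof -
  note nf = NS_facts[OF assms]
  have s: "sgn (zc p0) = 1 \<or> sgn (zc p0) = -1" using sgn_cases[OF nf(2)] .
  have inner: "partial (hem (sgn (zc p0)) (Lfun r1 r2)) q j = GL' r1 r2 q (axis j 1)" if "q \<in> SD" for q
    apply (rule partial_eqI[OF GL_deriv[OF that] open_SD that])
    using hemL s by blast
  have d: "((\<lambda>q. GL' r1 r2 q (axis j 1)) has_derivative
      (\<lambda>h. - r1 * (h$1 * (axis j 1)$1 + h$2 * (axis j 1)$2)
            + r2 * (h$3 * (axis j 1)$3 + h$4 * (axis j 1)$4))) (at 0)"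
    unfolding GL'_def wq_def
    by (auto intro!: derivative_eq_intros ext simp: field_simps)
  have "hess (Lfun r1 r2) p0 $ i $ j = partial (\<lambda>q. partial (hem (sgn (zc p0)) (Lfun r1 r2)) q j) 0 i"
    by (simp add: hess_def nf(1))
  also have "\<dots> = - r1 * ((axis i 1)$1 * (axis j 1)$1 + (axis i 1)$2 * (axis j 1)$2)
            + r2 * ((axis i 1)$3 * (axis j 1)$3 + (axis i 1)$4 * (axis j 1)$4)"
    apply (rule trans[OF partial_eqI[OF d open_SD zero_SD]])
    using inner by (simp_all add: algebra_simps)
  finally show ?thesis .
qed

lemma hess_H:
  assumes "p0 = Npt \<or> p0 = Spt"
  shows "hess Hfun p0 $ i $ j =
    ((axis j 1)$1 * (axis i 1)$3 + (axis i 1)$1 * (axis j 1)$3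
     + (axis j 1)$2 * (axis i 1)$4 + (axis i 1)$2 * (axis j 1)$4) / 2"
proof -
  note nf = NS_facts[OF assms]
  have inner: "partial (hem (sgn (zc p0)) Hfun) q j = GH' q (axis j 1)" for q
    apply (rule partial_eqI[OF GH_deriv open_UNIV UNIV_I])
    by (simp add: hemH)
  have d: "((\<lambda>q. GH' q (axis j 1)) has_derivative
      (\<lambda>h. ((axis j 1)$1 * h$3 + h$1 * (axis j 1)$3
     + (axis j 1)$2 * h$4 + h$2 * (axis j 1)$4) / 2)) (at 0)"
    unfolding GH'_def
    by (auto intro!: derivative_eq_intros ext simp: field_simps)
  have "hess Hfun p0 $ i $ j = partial (\<lambda>q. partial (hem (sgn (zc p0)) Hfun) q j) 0 i"
    by (simp add: hess_def nf(1))
  also have "\<dots> = ((axis j 1)$1 * (axis i 1)$3 + (axis i 1)$1 * (axis j 1)$3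
     + (axis j 1)$2 * (axis i 1)$4 + (axis i 1)$2 * (axis j 1)$4) / 2"
    apply (rule trans[OF partial_eqI[OF d open_UNIV UNIV_I]])
    using inner by (simp_all add: algebra_simps)
  finally show ?thesis .
qed



definition GC' :: "real^4 \<Rightarrow> real^4 \<Rightarrow> real" where
  "GC' q h = ((-(q$2 * h$2) / sqrt(1 - (q$2)^2)) * (cos(q$1) * q$3 + sin(q$1) * q$4)
      + sqrt(1-(q$2)^2) * (-sin(q$1)*h$1*q$3 + cos(q$1)*h$3 + cos(q$1)*h$1*q$4 + sin(q$1)*h$4)) / 2"

lemma cylH: "cyl Hfun q = sqrt(1-(q$2)^2) * (cos(q$1) * q$3 + sin(q$1) * q$4) / 2"
  by (simp add: cyl_def Hfun_def algebra_simps)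

lemma cylH_deriv: assumes "\<bar>q$2\<bar> < 1"
  shows "(cyl Hfun has_derivative GC' q) (at q)"
proof -
  have pos: "1 - (q$2)^2 > 0" using assms by (simp add: abs_square_less_1)
  have sq: "sqrt (1 - (q$2)^2) \<noteq> 0" using pos by simp
  show ?thesis
    unfolding cylH[abs_def]
    apply (auto intro!: derivative_eq_intros ext simp: pos)
    using pos apply linarith
    using sq apply (simp add: GC'_def inverse_eq_divide field_simps)
    done
qed

lemma cylL: "cyl (Lfun r1 r2) q = r1 * ln \<bar>q$2\<bar> + r2 / 2 * ((q$3)^2 + (q$4)^2)"
  by (simp add: cyl_def Lfun_def)

lemma partial_cylL2: assumes "q$2 \<noteq> 0"
  shows "partial (cyl (Lfun r1 r2)) q 2 = r1 / q$2"
proof (cases "q$2 > 0")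
  case True
  have d: "((\<lambda>q::real^4. r1 * ln (q$2) + r2 / 2 * ((q$3)^2 + (q$4)^2)) has_derivative
       (\<lambda>h. r1 * h$2 / q$2 + r2 * (q$3 * h$3 + q$4 * h$4))) (at q)"
    using True by (auto intro!: derivative_eq_intros ext simp: field_simps)
  have o: "open {q::real^4. q$2 > 0}" by (auto intro!: open_Collect_less continuous_intros)
  show ?thesis
    apply (rule trans[OF partial_eqI[OF d o]])
    using True by (auto simp: cylL)
next
  case False
  then have n: "q$2 < 0" using assms by simp
  have d: "((\<lambda>q::real^4. r1 * ln (- q$2) + r2 / 2 * ((q$3)^2 + (q$4)^2)) has_derivative
       (\<lambda>h. r1 * h$2 / q$2 + r2 * (q$3 * h$3 + q$4 * h$4))) (at q)"
    using n by (auto intro!: derivative_eq_intros ext simp: field_simps)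
  have o: "open {q::real^4. q$2 < 0}" by (auto intro!: open_Collect_less continuous_intros)
  show ?thesis
    apply (rule trans[OF partial_eqI[OF d o]])
    using n by (auto simp: cylL)
qed

lemma partial_cylH:
  assumes "\<bar>q$2\<bar> < 1"
  shows "partial (cyl Hfun) q i = GC' q (axis i 1)"
  by (rule partial_eqI[OF cylH_deriv[OF assms] open_UNIV UNIV_I]) simp

definition TZ :: "(real^4) set" where "TZ = {q. q$2 \<noteq> 0}"

lemma nontriv:
  assumes "c$2 = 0" shows "\<not> trivial_limit (at c within TZ)"
  unfolding trivial_limit_within islimpt_approachable
proof (intro notI, elim notE, intro allI impI)
  fix e :: real assume e: "e > 0"
  let ?x = "c + (e/2) *\<^sub>R axis 2 1"
  have "?x $ 2 = e/2" using assms by simp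
  moreover have "dist ?x c = e/2" using e by (simp add: dist_norm)
  ultimately show "\<exists>x'\<in>TZ. x' \<noteq> c \<and> dist x' c < e"
    using e by (intro bexI[of _ ?x]) (auto simp: TZ_def)
qed

lemma ev_near:
  "eventually (\<lambda>q. q \<in> TZ \<and> \<bar>q$2 - c$2\<bar> < 1) (at c within TZ)"
proof -
  have "eventually (\<lambda>q. q \<in> TZ \<and> dist q c < 1) (at c within TZ)"
    by (auto simp: eventually_at intro!: exI[of _ 1])
  then show ?thesis
    apply (rule eventually_mono)
    by (metis component_le_norm_cart dist_norm order_le_less_trans vector_minus_component)
qed



lemma Lim_ev:
  assumes "\<not> trivial_limit F" "eventually (\<lambda>q. f q = g q) F" "isCont g c" "F = at c within S"
  shows "Lim F f = g c"
proof -
  have "(g \<longlongrightarrow> g c) F" using assms(3,4) isCont_def tendsto_mono at_le by (metis subset_UNIV)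
  then have "(f \<longlongrightarrow> g c) F" using tendsto_cong[OF assms(2)] by simp
  then show ?thesis using tendsto_Lim[OF assms(1)] by blast
qed

lemma bdiff_Z:
  assumes "zc p = 0"
  shows "bdiff (Lfun r1 r2) p $ 2 = r1"
    "bdiff Hfun p $ 2 = 0"
    "bdiff Hfun p $ 3 = cos (cyl_coords p $ 1) / 2"
    "bdiff Hfun p $ 4 = sin (cyl_coords p $ 1) / 2"
proof -
  define c where "c = cyl_coords p"
  have c2: "c$2 = 0" using assms by (cases p) (auto simp: c_def cyl_coords_def zc_def)
  note nt = nontriv[OF c2]
  have bd: "bdiff f p $ i = Lim (at c within TZ) (\<lambda>q. bpart_cyl f q i)" for f i
    using assms by (simp add: bdiff_def c_def TZ_def)
  have ev: "eventually (\<lambda>q. q \<in> TZ \<and> \<bar>q$2\<bar> < 1) (at c within TZ)"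
    using ev_near[of c] c2 by simp
  show "bdiff (Lfun r1 r2) p $ 2 = r1"
    unfolding bd
    apply (rule Lim_ev[OF nt _ _ refl, where g = "\<lambda>q. r1"])
     apply (rule eventually_mono[OF ev])
     apply (simp add: bpart_cyl_def partial_cylL2 TZ_def)
    by simp
  show "bdiff Hfun p $ 2 = 0"
  proof -
    have "bdiff Hfun p $ 2 = (\<lambda>q. q$2 * (-(q$2) / sqrt(1-(q$2)^2) * (cos(q$1) * q$3 + sin(q$1) * q$4)) / 2) c"
      unfolding bd
      apply (rule Lim_ev[OF nt _ _ refl])
       apply (rule eventually_mono[OF ev])
       apply (simp add: bpart_cyl_def partial_cylH GC'_def)
      using c2 by (auto intro!: continuous_intros)
    then show ?thesis using c2 by simp
  qed
  show "bdiff Hfun p $ 3 = cos (cyl_coords p $ 1) / 2"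
  proof -
    have "bdiff Hfun p $ 3 = (\<lambda>q. sqrt(1-(q$2)^2) * cos(q$1) / 2) c"
      unfolding bd
      apply (rule Lim_ev[OF nt _ _ refl])
       apply (rule eventually_mono[OF ev])
       apply (simp add: bpart_cyl_def partial_cylH GC'_def)
      by (auto intro!: continuous_intros)
    then show ?thesis using c2 by (simp add: c_def)
  qed
  show "bdiff Hfun p $ 4 = sin (cyl_coords p $ 1) / 2"
  proof -
    have "bdiff Hfun p $ 4 = (\<lambda>q. sqrt(1-(q$2)^2) * sin(q$1) / 2) c"
      unfolding bd
      apply (rule Lim_ev[OF nt _ _ refl])
       apply (rule eventually_mono[OF ev])
       apply (simp add: bpart_cyl_def partial_cylH GC'_def)
      by (auto intro!: continuous_intros)
    then show ?thesis using c2 by (simp add: c_def)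
  qed
qed



lemma rank2_iff:
  "rank (vector [r1, r2] :: real^4^2) = 2 \<longleftrightarrow> (\<forall>a b. a *\<^sub>R r1 + b *\<^sub>R r2 = 0 \<longrightarrow> a = 0 \<and> b = 0)"
proof -
  let ?A = "vector [r1, r2] :: real^4^2"
  have tv: "transpose ?A *v x = x$1 *\<^sub>R r1 + x$2 *\<^sub>R r2" for x
    by (simp add: vec_eq_iff matrix_vector_mult_def transpose_def sum_2 mult.commute)
  have nz: "x \<noteq> 0 \<longleftrightarrow> x$1 \<noteq> 0 \<or> x$2 \<noteq> 0" for x :: "real^2"
    by (auto simp: vec_eq_iff forall_2)
  have "rank ?A = 2 \<longleftrightarrow> rank (transpose ?A) = CARD(2)" by (simp add: rank_transpose)
  also have "\<dots> \<longleftrightarrow> \<not> (\<exists>x. x \<noteq> 0 \<and> transpose ?A *v x = 0)"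
    using matrix_nonfull_linear_equations_eq[of "transpose ?A"] by blast
  also have "\<dots> \<longleftrightarrow> (\<forall>a b. a *\<^sub>R r1 + b *\<^sub>R r2 = 0 \<longrightarrow> a = 0 \<and> b = 0)"
  proof
    assume h: "\<not> (\<exists>x. x \<noteq> 0 \<and> transpose ?A *v x = 0)"
    show "\<forall>a b. a *\<^sub>R r1 + b *\<^sub>R r2 = 0 \<longrightarrow> a = 0 \<and> b = 0"
    proof (intro allI impI)
      fix a b assume "a *\<^sub>R r1 + b *\<^sub>R r2 = 0"
      moreover have "transpose ?A *v (vector [a, b]) = a *\<^sub>R r1 + b *\<^sub>R r2"
        using tv[of "vector [a,b]"] by (simp only: vector_2)
      ultimately have "transpose ?A *v (vector [a, b]) = 0" by simp
      then show "a = 0 \<and> b = 0" using h nz[of "vector [a,b]"] by auto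
    qed
  next
    assume h: "\<forall>a b. a *\<^sub>R r1 + b *\<^sub>R r2 = 0 \<longrightarrow> a = 0 \<and> b = 0"
    show "\<not> (\<exists>x. x \<noteq> 0 \<and> transpose ?A *v x = 0)"
    proof
      assume "\<exists>x. x \<noteq> 0 \<and> transpose ?A *v x = 0"
      then obtain x where x: "x \<noteq> 0" "transpose ?A *v x = 0" by blast
      then have "x$1 *\<^sub>R r1 + x$2 *\<^sub>R r2 = 0" by (simp only: tv)
      then have "x$1 = 0 \<and> x$2 = 0" using h by blast
      then show False using x(1) nz by blast
    qed
  qed
  finally show ?thesis .
qed

lemma rank_le2: "rank (A :: real^4^2) \<le> 2"
  using rank_bound[of A] by simp

lemma bdiff_NS:
  assumes "p0 = Npt \<or> p0 = Spt"
  shows "bdiff (Lfun r1 r2) p0 = 0" "bdiff Hfun p0 = 0"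
proof -
  note nf = NS_facts[OF assms]
  show "bdiff (Lfun r1 r2) p0 = 0"
    using bdiff_L_hem[OF nf(3,2)] nf(1) by (simp add: vec_eq_iff GL'_def)
  show "bdiff Hfun p0 = 0"
    using bdiff_H_hem[OF nf(2)] nf(1) by (simp add: vec_eq_iff GH'_def)
qed

lemma rank_NS:
  assumes "p0 = Npt \<or> p0 = Spt"
  shows "rank_dF r1 r2 p0 = 0"
proof -
  have "(vector [0, 0] :: real^4^2) = 0" by (simp add: vec_eq_iff forall_2)
  then show ?thesis using bdiff_NS[OF assms] by (simp add: rank_dF_def)
qed

lemma pos_comb:
  fixes a b r1 r2 w :: real
  assumes "r1 > 0" "r2 > 0" "w > 0" "a \<noteq> 0 \<or> b \<noteq> 0"
  shows "4 * a^2 * r1 * r2 + b^2 * w > 0"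
proof (cases "a = 0")
  case True
  then have "b^2 > 0" using assms by simp
  then show ?thesis using True assms by simp
next
  case False
  then have "a^2 > 0" by simp
  then have "4 * a^2 * r1 * r2 > 0" using assms by simp
  moreover have "b^2 * w \<ge> 0" using assms by simp
  ultimately show ?thesis by linarith
qed

lemma rank_other:
  assumes r1: "r1 > 0" and r2: "r2 > 0" and pM: "p \<in> M" and pNS: "p \<noteq> Npt" "p \<noteq> Spt"
  shows "rank_dF r1 r2 p = 2"
proof (cases "zc p = 0")
  case True
  note bz = bdiff_Z[OF True]
  show ?thesis unfolding rank_dF_def rank2_iff
  proof (intro allI impI)
    fix a b assume h: "a *\<^sub>R bdiff (Lfun r1 r2) p + b *\<^sub>R bdiff Hfun p = 0"
    have h2: "a * r1 = 0" using arg_cong[OF h, of "\<lambda>v. v$2"] bz by simp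
    then have a: "a = 0" using r1 by simp
    have h3: "b * cos (cyl_coords p $ 1) = 0" using arg_cong[OF h, of "\<lambda>v. v$3"] bz a by simp
    have h4: "b * sin (cyl_coords p $ 1) = 0" using arg_cong[OF h, of "\<lambda>v. v$4"] bz a by simp
    have "b = 0"
    proof (rule ccontr)
      assume "b \<noteq> 0"
      then have "cos (cyl_coords p $ 1) = 0" "sin (cyl_coords p $ 1) = 0" using h3 h4 by auto
      then show False using sin_cos_squared_add[of "cyl_coords p $ 1"] by simp
    qed
    then show "a = 0 \<and> b = 0" using a by simp
  qed
next
  case False
  obtain x y z u v where p: "p = (x,y,z,u,v)" by (cases p) auto
  have z: "z \<noteq> 0" using False by (simp add: p zc_def)
  have sph: "x^2 + y^2 + z^2 = 1" using pM by (simp add: p M_def)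
  define w where "w = 1 - x^2 - y^2"
  have wz: "w = z^2" using sph by (simp add: w_def)
  have w: "w > 0" using z by (simp add: wz)
  have hc: "hem_coords p = vector [x,y,u,v]" by (simp add: p hem_coords_def)
  have wqe: "wq (vector [x,y,u,v]) = w" by (simp add: wq_def w_def)
  note bL = bdiff_L_hem[OF pM False, of r1 r2]
  note bH = bdiff_H_hem[OF False]
  show ?thesis unfolding rank_dF_def rank2_iff
  proof (intro allI impI)
    fix a b assume h: "a *\<^sub>R bdiff (Lfun r1 r2) p + b *\<^sub>R bdiff Hfun p = 0"
    have i1: "a * (r1 / 2 * (- (2 * x) / w)) + b * (u / 2) = 0"
      using arg_cong[OF h, of "\<lambda>v. v$1"] by (simp add: bL bH hc GL'_def GH'_def wqe)
    have i2: "a * (r1 / 2 * (- (2 * y) / w)) + b * (v / 2) = 0"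
      using arg_cong[OF h, of "\<lambda>v. v$2"] by (simp add: bL bH hc GL'_def GH'_def wqe)
    have i3: "a * (r2 * u) + b * (x / 2) = 0"
      using arg_cong[OF h, of "\<lambda>v. v$3"] by (simp add: bL bH hc GL'_def GH'_def wqe)
    have i4: "a * (r2 * v) + b * (y / 2) = 0"
      using arg_cong[OF h, of "\<lambda>v. v$4"] by (simp add: bL bH hc GL'_def GH'_def wqe)
    show "a = 0 \<and> b = 0"
    proof (rule ccontr)
      assume ab: "\<not> (a = 0 \<and> b = 0)"
      have pc: "4 * a^2 * r1 * r2 + b^2 * w > 0" using pos_comb[OF r1 r2 w] ab by blast
      have e1: "- a * r1 * x + b * u * w / 2 = 0" using i1 w by (simp add: field_simps)
      have e2: "- a * r1 * y + b * v * w / 2 = 0" using i2 w by (simp add: field_simps)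
      have "x * (4 * a^2 * r1 * r2 + b^2 * w) = -4*a*r2 * (- a * r1 * x + b * u * w / 2) + 2*b*w*(a * (r2 * u) + b * (x / 2))"
        by (simp add: algebra_simps power2_eq_square)
      then have "x * (4 * a^2 * r1 * r2 + b^2 * w) = 0" using e1 i3 by simp
      then have x0: "x = 0" using pc by simp
      have "y * (4 * a^2 * r1 * r2 + b^2 * w) = -4*a*r2 * (- a * r1 * y + b * v * w / 2) + 2*b*w*(a * (r2 * v) + b * (y / 2))"
        by (simp add: algebra_simps power2_eq_square)
      then have "y * (4 * a^2 * r1 * r2 + b^2 * w) = 0" using e2 i4 by simp
      then have y0: "y = 0" using pc by simp
      have u0: "u = 0" using e1 i3 x0 ab r2 w by auto
      have v0: "v = 0" using e2 i4 y0 ab r2 w by auto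
      have "z^2 = 1" using sph x0 y0 by simp
      then have "z = 1 \<or> z = -1" by (simp add: power2_eq_1_iff)
      then show False using pNS x0 y0 u0 v0 by (auto simp: p Npt_def Spt_def)
    qed
  qed
qed



definition OmN :: "real \<Rightarrow> real \<Rightarrow> real^4^4" where
  "OmN r1 r2 = vector [vector [0, -r1, 0, 0], vector [r1, 0, 0, 0], vector [0, 0, 0, r2], vector [0, 0, -r2, 0]]"
definition OiN :: "real \<Rightarrow> real \<Rightarrow> real^4^4" where
  "OiN r1 r2 = vector [vector [0, 1/r1, 0, 0], vector [-1/r1, 0, 0, 0], vector [0, 0, 0, -1/r2], vector [0, 0, 1/r2, 0]]"
definition HLN :: "real \<Rightarrow> real \<Rightarrow> real^4^4" where
  "HLN r1 r2 = vector [vector [-r1, 0, 0, 0], vector [0, -r1, 0, 0], vector [0, 0, r2, 0], vector [0, 0, 0, r2]]"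
definition HHN :: "real^4^4" where
  "HHN = vector [vector [0, 0, 1/2, 0], vector [0, 0, 0, 1/2], vector [1/2, 0, 0, 0], vector [0, 1/2, 0, 0]]"
definition AL :: "real^4^4" where
  "AL = vector [vector [0, -1, 0, 0], vector [1, 0, 0, 0], vector [0, 0, 0, -1], vector [0, 0, 1, 0]]"
definition AH :: "real \<Rightarrow> real \<Rightarrow> real^4^4" where
  "AH r1 r2 = vector [vector [0, 0, 0, 1/(2*r1)], vector [0, 0, -1/(2*r1), 0], vector [0, -1/(2*r2), 0, 0], vector [1/(2*r2), 0, 0, 0]]"

lemma matrix_inv_eqI:
  fixes A B :: "real^4^4"
  assumes "A ** B = mat 1" "B ** A = mat 1"
  shows "matrix_inv A = B"
proof -
  let ?B' = "matrix_inv A"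
  have "A ** ?B' = mat 1 \<and> ?B' ** A = mat 1"
    unfolding matrix_inv_def by (rule someI[of _ B]) (use assms in blast)
  then have "?B' = ?B' ** (A ** B)" "?B' ** A = mat 1" using assms by simp_all
  then show ?thesis by (metis matrix_mul_assoc matrix_mul_lid)
qed

lemmas mexp = vec_eq_iff forall_4 matrix_matrix_mult_def sum_4 mat_def

lemma Omega_NS: assumes "p0 = Npt \<or> p0 = Spt" shows "Omega r1 r2 p0 = OmN r1 r2"
  using assms by (auto simp: Omega_def OmN_def Npt_def Spt_def)

lemma Oinv: assumes "r1 > 0" "r2 > 0" shows "matrix_inv (OmN r1 r2) = OiN r1 r2"
  apply (rule matrix_inv_eqI)
  using assms by (simp_all add: mexp OmN_def OiN_def)

lemma hessL_NS: assumes "p0 = Npt \<or> p0 = Spt" shows "hess (Lfun r1 r2) p0 = HLN r1 r2"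
  by (simp add: vec_eq_iff forall_4 hess_L[OF assms] HLN_def)

lemma hessH_NS: assumes "p0 = Npt \<or> p0 = Spt" shows "hess Hfun p0 = HHN"
  by (simp add: vec_eq_iff forall_4 hess_H[OF assms] HHN_def)

lemma AL_eq: assumes "r1 > 0" "r2 > 0" shows "OiN r1 r2 ** HLN r1 r2 = AL"
  using assms by (simp add: mexp OiN_def HLN_def AL_def)

lemma AH_eq: assumes "r1 > 0" "r2 > 0" shows "OiN r1 r2 ** HHN = AH r1 r2"
  using assms by (simp add: mexp OiN_def HHN_def AH_def)

lemma Aops_NS: assumes "r1 > 0" "r2 > 0" "p0 = Npt \<or> p0 = Spt"
  shows "A_op (Omega r1 r2 p0) (hess (Lfun r1 r2) p0) = AL"
        "A_op (Omega r1 r2 p0) (hess Hfun p0) = AH r1 r2"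
  using assms by (simp_all add: A_op_def Omega_NS hessL_NS hessH_NS Oinv AL_eq AH_eq)

lemma span_two: "span {A, B :: real^4^4} = {a *\<^sub>R A + b *\<^sub>R B | a b. True}"
proof -
  have "x \<in> span {A, B} \<longleftrightarrow> (\<exists>a b. x = a *\<^sub>R A + b *\<^sub>R B)" for x
  proof -
    have "x \<in> span {A, B} \<longleftrightarrow> (\<exists>k kb. x - k *\<^sub>R A = kb *\<^sub>R B)"
      by (auto simp: span_breakdown_eq span_singleton)
    also have "\<dots> \<longleftrightarrow> (\<exists>a b. x = a *\<^sub>R A + b *\<^sub>R B)"
      by (metis add_diff_cancel_left' diff_add_cancel add.commute)
    finally show ?thesis .
  qed
  then show ?thesis by blast
qed



lemmas mm = matrix_matrix_mult_def sum_4 AL_def AH_def OmN_def transpose_def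

lemma normalizer:
  fixes X :: "real^4^4"
  assumes r1: "r1 > 0" and r2: "r2 > 0"
   and hL: "lie_br X AL = a *\<^sub>R AL + b *\<^sub>R AH r1 r2"
   and hH: "lie_br X (AH r1 r2) = c *\<^sub>R AL + d *\<^sub>R AH r1 r2"
   and hS: "transpose X ** OmN r1 r2 + OmN r1 r2 ** X = 0"
  shows "X = (X$2$1) *\<^sub>R AL + (2 * r1 * X$1$4) *\<^sub>R AH r1 r2"
proof -
  have L: "(X ** AL)$i$j - (AL ** X)$i$j = (a *\<^sub>R AL + b *\<^sub>R AH r1 r2)$i$j" for i j
    using hL unfolding lie_br_def by (metis vector_minus_component)
  have H: "(X ** AH r1 r2)$i$j - (AH r1 r2 ** X)$i$j = (c *\<^sub>R AL + d *\<^sub>R AH r1 r2)$i$j" for i j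
    using hH unfolding lie_br_def by (metis vector_minus_component)
  have S: "(transpose X ** OmN r1 r2)$i$j + (OmN r1 r2 ** X)$i$j = 0" for i j
    using hS by (metis vector_add_component zero_index)
  have l11: "X$1$2 + X$2$1 = 0" using L[of 1 1] by (simp add: mm)
  have l12: "X$2$2 - X$1$1 = -a" using L[of 1 2] by (simp add: mm)
  have l21: "X$2$2 - X$1$1 = a" using L[of 2 1] by (simp add: mm)
  have l13: "X$1$4 + X$2$3 = 0" using L[of 1 3] by (simp add: mm)
  have l31: "X$3$2 + X$4$1 = 0" using L[of 3 1] by (simp add: mm)
  have l34: "X$4$4 - X$3$3 = -a" using L[of 3 4] by (simp add: mm)
  have l14: "X$2$4 - X$1$3 = b / (2*r1)" using L[of 1 4] by (simp add: mm)
  have l23: "X$2$4 - X$1$3 = - b / (2*r1)" using L[of 2 3] by (simp add: mm)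
  have l32: "X$4$2 - X$3$1 = - b / (2*r2)" using L[of 3 2] by (simp add: mm)
  have l41: "X$4$2 - X$3$1 = b / (2*r2)" using L[of 4 1] by (simp add: mm)
  have l33: "X$3$4 + X$4$3 = 0" using L[of 3 3] by (simp add: mm)
  have h13: "X$1$2 + X$4$3 = 0" using H[of 1 3] r1 by (simp add: mm field_simps)
  have h21: "X$2$4 / (2*r2) + X$3$1 / (2*r1) = c" using H[of 2 1] by (simp add: mm)
  have h43: "- (X$4$2 / (2*r1)) - X$1$3 / (2*r2) = c" using H[of 4 3] by (simp add: mm)
  have s: "X$2$2 * r1 + r1 * X$1$1 = 0" "r1 * X$1$3 = X$4$2 * r2" "X$3$3 * r2 + r2 * X$4$4 = 0"
      "X$2$3 * r1 + r2 * X$4$1 = 0" "X$3$2 * r2 + r1 * X$1$4 = 0"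
    using S[of 1 2] S[of 1 3] S[of 3 4] S[of 2 4] S[of 3 2] by (simp_all add: mm algebra_simps)
  have a0: "a = 0" using l12 l21 by simp
  have x11: "X$1$1 = 0" and x22: "X$2$2 = 0" using s(1) l12 a0 r1 by (auto simp: algebra_simps)
  have x33: "X$3$3 = 0" and x44: "X$4$4 = 0" using s(3) l34 a0 r2 by (auto simp: algebra_simps)
  have b0: "b = 0" using l14 l23 r1 by (simp add: field_simps)
  have x24: "X$2$4 = X$1$3" using l14 b0 by simp
  have x42: "X$4$2 = X$3$1" using l41 b0 by simp
  have "X$1$3 / (2*r2) + X$3$1 / (2*r1) = 0" using h21 h43 x24 x42 by simp
  then have "r1 * X$1$3 + r2 * X$3$1 = 0" using r1 r2 by (simp add: field_simps)
  moreover have "r1 * X$1$3 = X$3$1 * r2" using s(2) x42 by simp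
  ultimately have x31: "X$3$1 = 0" and x13: "X$1$3 = 0" using r1 r2 by auto
  have x23: "X$2$3 = - X$1$4" using l13 by simp
  have x41: "X$4$1 = r1 * X$1$4 / r2" using s(4) r2 unfolding x23 by (simp add: field_simps)
  have x32: "X$3$2 = - (r1 * X$1$4 / r2)" using s(5) r2 by (simp add: field_simps)
  show ?thesis
    using x11 x22 x33 x44 x24 x42 x31 x13 x41 x32 l11 l13 l33 h13 r1 r2
    by (simp add: vec_eq_iff forall_4 AL_def AH_def field_simps)
qed



lemma h_in_sp: assumes "r1 > 0" "r2 > 0"
  shows "a *\<^sub>R AL + b *\<^sub>R AH r1 r2 \<in> sp (OmN r1 r2)"
  unfolding sp_def using assms by (simp add: vec_eq_iff forall_4 mm field_simps)

lemma h_comm: assumes "r1 > 0" "r2 > 0"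
  shows "lie_br (a *\<^sub>R AL + b *\<^sub>R AH r1 r2) (c *\<^sub>R AL + d *\<^sub>R AH r1 r2) = 0"
  unfolding lie_br_def using assms by (simp add: vec_eq_iff forall_4 mm field_simps)

lemma cartan: assumes r1: "r1 > 0" and r2: "r2 > 0"
  shows "cartan_subalgebra (sp (OmN r1 r2)) (span {AL, AH r1 r2})"
proof -
  let ?h = "span {AL, AH r1 r2}"
  have hh: "X \<in> ?h \<longleftrightarrow> (\<exists>a b. X = a *\<^sub>R AL + b *\<^sub>R AH r1 r2)" for X
    by (simp add: span_two)
  have sub: "?h \<subseteq> sp (OmN r1 r2)" using h_in_sp[OF r1 r2] hh by auto
  have br0: "X \<in> ?h \<Longrightarrow> Y \<in> ?h \<Longrightarrow> lie_br X Y = 0" for X Y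
    using h_comm[OF r1 r2] hh by auto
  have z: "(0::real^4^4) \<in> ?h" by (rule span_zero)
  have lcs1: "lcs ?h 1 = {0}"
  proof -
    have "{lie_br X Y | X Y. X \<in> ?h \<and> Y \<in> lcs ?h 0} = {0}"
    proof (rule set_eqI, rule iffI)
      fix v assume "v \<in> {lie_br X Y | X Y. X \<in> ?h \<and> Y \<in> lcs ?h 0}"
      then show "v \<in> {0}" using br0 by auto
    next
      fix v :: "real^4^4" assume "v \<in> {0}"
      then have "v = lie_br 0 0 \<and> (0::real^4^4) \<in> ?h \<and> (0::real^4^4) \<in> lcs ?h 0"
        using br0[OF z z] z by simp
      then show "v \<in> {lie_br X Y | X Y. X \<in> ?h \<and> Y \<in> lcs ?h 0}" by blast
    qed
    then show ?thesis by simp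
  qed
  have norm: "{X \<in> sp (OmN r1 r2). \<forall>Y\<in>?h. lie_br X Y \<in> ?h} = ?h"
  proof
    show "?h \<subseteq> {X \<in> sp (OmN r1 r2). \<forall>Y\<in>?h. lie_br X Y \<in> ?h}"
      using sub br0 z by auto
  next
    show "{X \<in> sp (OmN r1 r2). \<forall>Y\<in>?h. lie_br X Y \<in> ?h} \<subseteq> ?h"
    proof clarify
      fix X assume X: "X \<in> sp (OmN r1 r2)" "\<forall>Y\<in>?h. lie_br X Y \<in> ?h"
      have "AL \<in> ?h" "AH r1 r2 \<in> ?h" by (auto intro: span_base)
      then obtain a b c d where
        "lie_br X AL = a *\<^sub>R AL + b *\<^sub>R AH r1 r2"
        "lie_br X (AH r1 r2) = c *\<^sub>R AL + d *\<^sub>R AH r1 r2"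
        using X(2) hh by meson
      moreover have "transpose X ** OmN r1 r2 + OmN r1 r2 ** X = 0" using X(1) by (simp add: sp_def)
      ultimately have "X = (X$2$1) *\<^sub>R AL + (2 * r1 * X$1$4) *\<^sub>R AH r1 r2"
        using normalizer[OF r1 r2] by blast
      then show "X \<in> ?h" using hh by blast
    qed
  qed
  show ?thesis unfolding cartan_subalgebra_def
    using sub br0 lcs1 norm z
    by (auto intro!: exI[of _ 1] simp: subspace_span)
qed



definition BN :: "real \<Rightarrow> real \<Rightarrow> real^4^4" where
  "BN r1 r2 = 1 *\<^sub>R AL + (2 * sqrt (r1 * r2)) *\<^sub>R AH r1 r2"

lemma eig_eq:
  fixes w :: "complex^4"
  assumes r1: "r1 > 0" and r2: "r2 > 0"
  shows "(\<chi> i. \<Sum>j\<in>UNIV. complex_of_real (BN r1 r2 $i$j) * w$j) = (\<chi> i. e * w$i) \<longleftrightarrow>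
     (- w$2 + of_real (sqrt (r1*r2) / r1) * w$4 = e * w$1 \<and>
      w$1 - of_real (sqrt (r1*r2) / r1) * w$3 = e * w$2 \<and>
      - of_real (sqrt (r1*r2) / r2) * w$2 - w$4 = e * w$3 \<and>
      of_real (sqrt (r1*r2) / r2) * w$1 + w$3 = e * w$4)"
  using r1 r2 by (simp add: vec_eq_iff forall_4 sum_4 BN_def AL_def AH_def)

lemma eig_sub:
  fixes w :: "complex^4" and k1 k2 e :: complex
  assumes k: "k1 * k2 = 1"
   and E1: "- w$2 + k1 * w$4 = e * w$1"
   and E2: "w$1 - k1 * w$3 = e * w$2"
   and E3: "- k2 * w$2 - w$4 = e * w$3"
   and E4: "k2 * w$1 + w$3 = e * w$4"
   and w: "w \<noteq> 0"
  shows "e \<in> {Complex 1 1, Complex 1 (-1), Complex (-1) 1, Complex (-1) (-1)}"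
proof -
  have ii: "\<i> * \<i> = (-1::complex)" by simp
  define ph where "ph = w$1 + \<i> * w$2"
  define ps where "ps = w$3 + \<i> * w$4"
  define ph' where "ph' = w$1 - \<i> * w$2"
  define ps' where "ps' = w$3 - \<i> * w$4"
  have P1: "(e - \<i>) * ph = - \<i> * k1 * ps" unfolding ph_def ps_def using E1 E2 ii by algebra
  have P2: "(e - \<i>) * ps = \<i> * k2 * ph" unfolding ph_def ps_def using E3 E4 ii by algebra
  have P3: "(e + \<i>) * ph' = \<i> * k1 * ps'" unfolding ph'_def ps'_def using E1 E2 ii by algebra
  have P4: "(e + \<i>) * ps' = - \<i> * k2 * ph'" unfolding ph'_def ps'_def using E3 E4 ii by algebra
  have Q1: "((e - \<i>)^2 - 1) * ph = 0" using P1 P2 k ii by algebra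
  have Q2: "((e - \<i>)^2 - 1) * ps = 0" using P1 P2 k ii by algebra
  have Q3: "((e + \<i>)^2 - 1) * ph' = 0" using P3 P4 k ii by algebra
  have Q4: "((e + \<i>)^2 - 1) * ps' = 0" using P3 P4 k ii by algebra
  have "(e - \<i>)^2 = 1 \<or> (e + \<i>)^2 = 1"
  proof (rule ccontr)
    assume "\<not> ((e - \<i>)^2 = 1 \<or> (e + \<i>)^2 = 1)"
    then have "ph = 0" "ps = 0" "ph' = 0" "ps' = 0" using Q1 Q2 Q3 Q4 by auto
    then have "w$1 = 0" "w$2 = 0" "w$3 = 0" "w$4 = 0"
      unfolding ph_def ps_def ph'_def ps'_def by (auto simp: algebra_simps)
    then have "w = 0" by (simp add: vec_eq_iff forall_4)
    then show False using w by simp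
  qed
  then have "e - \<i> = 1 \<or> e - \<i> = -1 \<or> e + \<i> = 1 \<or> e + \<i> = -1"
    by (auto simp: power2_eq_1_iff)
  then show ?thesis by (auto simp: complex_eq_iff)
qed


lemma eigenvals_BN:
  assumes r1: "r1 > 0" and r2: "r2 > 0"
  shows "eigenvals (BN r1 r2) = {Complex 1 1, Complex 1 (-1), Complex (-1) 1, Complex (-1) (-1)}"
proof -
  define s where "s = sqrt (r1 * r2)"
  have ss: "s * s = r1 * r2" using r1 r2 by (simp add: s_def)
  have s0: "s > 0" using r1 r2 by (simp add: s_def)
  have k: "complex_of_real (s / r1) * complex_of_real (s / r2) = 1"
    using ss r1 r2 by (simp flip: of_real_mult)
  have ev: "e \<in> eigenvals (BN r1 r2) \<longleftrightarrow> (\<exists>w::complex^4. w \<noteq> 0 \<and>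
      - w$2 + of_real (s / r1) * w$4 = e * w$1 \<and>
      w$1 - of_real (s / r1) * w$3 = e * w$2 \<and>
      - of_real (s / r2) * w$2 - w$4 = e * w$3 \<and>
      of_real (s / r2) * w$1 + w$3 = e * w$4)" for e
    unfolding eigenvals_def s_def using eig_eq[OF r1 r2] by simp
  have vnz: "(vector [a, b, c, d] :: complex^4) \<noteq> 0" if "a \<noteq> 0" for a b c d
    using that by (metis vector_4(1) zero_index)
  have r2c: "complex_of_real r2 \<noteq> 0" using r2 by simp
  show ?thesis
  proof (rule set_eqI, rule iffI)
    fix e assume "e \<in> eigenvals (BN r1 r2)"
    then obtain w :: "complex^4" where "w \<noteq> 0"
      "- w$2 + of_real (s / r1) * w$4 = e * w$1"
      "w$1 - of_real (s / r1) * w$3 = e * w$2"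
      "- of_real (s / r2) * w$2 - w$4 = e * w$3"
      "of_real (s / r2) * w$1 + w$3 = e * w$4" using ev by blast
    then show "e \<in> {Complex 1 1, Complex 1 (-1), Complex (-1) 1, Complex (-1) (-1)}"
      using eig_sub[OF k] by blast
  next
    fix e assume "e \<in> {Complex 1 1, Complex 1 (-1), Complex (-1) 1, Complex (-1) (-1)}"
    then consider "e = Complex 1 1" | "e = Complex 1 (-1)" | "e = Complex (-1) 1" | "e = Complex (-1) (-1)" by blast
    then show "e \<in> eigenvals (BN r1 r2)"
    proof cases
      case 1
      let ?w = "vector [of_real r2, - \<i> * of_real r2, \<i> * of_real s, of_real s] :: complex^4"
      show ?thesis unfolding ev
        apply (rule exI[of _ ?w])
        using r1 r2 ss s0 by (simp add: 1 complex_eq_iff field_simps vnz)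
    next
      case 2
      let ?w = "vector [of_real r2, \<i> * of_real r2, - \<i> * of_real s, of_real s] :: complex^4"
      show ?thesis unfolding ev
        apply (rule exI[of _ ?w])
        using r1 r2 ss s0 by (simp add: 2 complex_eq_iff field_simps vnz)
    next
      case 3
      let ?w = "vector [of_real r2, - \<i> * of_real r2, - \<i> * of_real s, - of_real s] :: complex^4"
      show ?thesis unfolding ev
        apply (rule exI[of _ ?w])
        using r1 r2 ss s0 by (simp add: 3 complex_eq_iff field_simps vnz)
    next
      case 4
      let ?w = "vector [of_real r2, \<i> * of_real r2, \<i> * of_real s, - of_real s] :: complex^4"
      show ?thesis unfolding ev
        apply (rule exI[of _ ?w])
        using r1 r2 ss s0 by (simp add: 4 complex_eq_iff field_simps vnz)
    qed
  qed
qed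



lemma nondeg_NS: assumes "r1 > 0" "r2 > 0" "p0 = Npt \<or> p0 = Spt"
  shows "nondegenerate r1 r2 p0"
  unfolding nondegenerate_def Aops_NS[OF assms] unfolding Omega_NS[OF assms(3)]
  using cartan[OF assms(1,2)] .

lemma ff_NS: assumes "r1 > 0" "r2 > 0" "p0 = Npt \<or> p0 = Spt"
  shows "focus_focus r1 r2 p0"
  unfolding focus_focus_def Aops_NS[OF assms]
  apply (rule conjI[OF nondeg_NS[OF assms]])
  apply (rule exI[of _ 1], rule exI[of _ "2 * sqrt (r1 * r2)"], rule exI[of _ 1], rule exI[of _ 1])
  using eigenvals_BN[OF assms(1,2)] by (simp add: BN_def)

theorem proposition4p4:
  fixes \<rho>1 \<rho>2 :: real
  assumes "\<rho>1 > 0" and "\<rho>2 > 0"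
  shows "{p \<in> M. rank_dF \<rho>1 \<rho>2 p < 2} = {Npt, Spt}
     \<and> fixed_point \<rho>1 \<rho>2 Npt \<and> fixed_point \<rho>1 \<rho>2 Spt
     \<and> nondegenerate \<rho>1 \<rho>2 Npt \<and> focus_focus \<rho>1 \<rho>2 Npt
     \<and> nondegenerate \<rho>1 \<rho>2 Spt \<and> focus_focus \<rho>1 \<rho>2 Spt
     \<and> (\<forall>p \<in> M - {Npt, Spt}. rank_dF \<rho>1 \<rho>2 p = 2)"
proof -
  have NS: "Npt = Npt \<or> Npt = Spt" "Spt = Npt \<or> Spt = Spt" by simp_all
  have set: "{p \<in> M. rank_dF \<rho>1 \<rho>2 p < 2} = {Npt, Spt}"
  proof
    show "{p \<in> M. rank_dF \<rho>1 \<rho>2 p < 2} \<subseteq> {Npt, Spt}"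
      using rank_other[OF assms] by fastforce
    show "{Npt, Spt} \<subseteq> {p \<in> M. rank_dF \<rho>1 \<rho>2 p < 2}"
      using rank_NS[OF NS(1)] rank_NS[OF NS(2)] NS_facts(3)[OF NS(1)] NS_facts(3)[OF NS(2)] by auto
  qed
  show ?thesis
    using set bdiff_NS[OF NS(1)] bdiff_NS[OF NS(2)]
      nondeg_NS[OF assms NS(1)] nondeg_NS[OF assms NS(2)]
      ff_NS[OF assms NS(1)] ff_NS[OF assms NS(2)] rank_other[OF assms]
    by (auto simp: fixed_point_def)
qed


end
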